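(* Let $(\Omega(\mathcal{A}),d)$ be a differential calculus on a complex algebra $\mathcal{A}$ with $\mathcal{E}=\Omega^1(\mathcal{A})$ a finitely generated projective right $\mathcal{A}$-module satisfying: (1) $\mathcal{E}=\mathcal{Z}(\mathcal{E})\otimes_{\mathcal{Z}(\mathcal{A})}\mathcal{A}$; (2) $\mathcal{E}\otimes_{\mathcal{A}}\mathcal{E}=\ker(\wedge)\oplus\mathcal{F}$ with $Q=\wedge|_{\mathcal{F}}:\mathcal{F}\to\Omega^2(\mathcal{A})$ a right $\mathcal{A}$-linear isomorphism; (3) $\sigma(\omega\otimes_{\mathcal{A}}\eta)=\eta\otimes_{\mathcal{A}}\omega$ for all $\omega,\eta\in\mathcal{Z}(\mathcal{E})$. Let $g$ be a pseudo-Riemannian bilinear metric and $\nabla_0$ as in the context. For $\omega,\eta,\theta\in\mathcal{Z}(\mathcal{E})$ define \begin{align*} \psi_{\omega,\theta}(\eta)&=g(\omega\otimes_{\mathcal{A}}dg(\eta\otimes_{\mathcal{A}}\theta))-g(\eta\otimes_{\mathcal{A}}dg(\theta\otimes_{\mathcal{A}}\omega))+g(\theta\otimes_{\mathcal{A}}dg(\omega\otimes_{\mathcal{A}}\eta))\\ &\quad-G_{\eta,\theta}\big((1-\sigma)\nabla_0(\omega)\big)+G_{\omega,\theta}\big((1-\sigma)\nabla_0(\eta)\big)-G_{\eta,\omega}\big((1-\sigma)\nabla_0(\theta)\big). \end{align*} Then $\psi_{\omega,\theta}(\eta)\in\mathcal{Z}(\mathcal{A})$ for all $\omega,\eta,\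theta\in\mathcal{Z}(\mathcal{E})$.
   Context: A differential calculus: $\Omega(\mathcal{A})=\oplus_{j\ge0}\Omega^j(\mathcal{A})$, $\Omega^0=\mathcal{A}$, bimodules $\Omega^j$, an $\mathcal{A}$-bimodule product $\wedge$ adding degrees, $d$ of degree one with $d^2=0$ and the graded Leibniz rule, $\Omega^j$ right-spanned by $da_0\wedge\cdots\wedge da_{j-1}$. $\wedge:\mathcal{E}\otimes_{\mathcal{A}}\mathcal{E}\to\Omega^2(\mathcal{A})$ is the induced product; $P_{\rm sym}$ the idempotent with image $\ker\wedge$ and kernel $\mathcal{F}$; $\sigma=2P_{\rm sym}-1$. $\mathcal{Z}(\mathcal{M})=\{m:am=ma\ \forall a\in\mathcal{A}\}$. A connection is a $\mathbb{C}$-linear $\nabla:\mathcal{E}\to\mathcal{E}\otimes_{\mathcal{A}}\mathcal{E}$ with $\nabla(\omega a)=\nabla(\omega)a+\omega\otimes_{\mathcal{A}}da$. With an idempotent $p\in M_n(\mathcal{A})$, $p(\mathcal{A}^n)=\mathcal{E}$, $\Phi_j=p(e_j)$, $\nabla^{Gr}(\sum_j\Phi_ja_j)=\sum_j\Phi_j\otimes_{\mathcal{A}}da_j$ and $\nabla_0:=\nabla^{Gr}-Q^{-1}\circ(\wedge\circ\nabla^{Gr}+d)$. A pseudo-Riemannian bilinear metric is an $\mathcal{A}$-bimodule map $g:\mathcal{E}\otimes_{\mathcal{A}}\mathcal{E}\to\mathcal{A}$ with $g\circ\sigma=g$ such that $e\mapsto g(e\otimes_{\mathcal{A}}-)$ is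 a right module isomorphism $\mathcal{E}\to\mathrm{Hom}_{\mathcal{A}}(\mathcal{E},\mathcal{A})$. For $\alpha,\beta\in\mathcal{E}$, $G_{\alpha,\beta}:\mathcal{E}\otimes_{\mathcal{A}}\mathcal{E}\to\mathcal{A}$ denotes the (well-defined) map $x\otimes_{\mathcal{A}}y\mapsto g(\alpha\otimes_{\mathcal{A}}x)\,g(\beta\otimes_{\mathcal{A}}y)$, written in the paper as $(g(\alpha\otimes_{\mathcal{A}}-)\otimes_{\mathcal{A}}g(\beta\otimes_{\mathcal{A}}-))$. *)

theory Defs
  imports Complex_Main "HOL-Library.Poly_Mapping"
begin

(* The whole differential calculus Omega(A) is modelled as one associative
   unital ring 'w (the product is the wedge product); Om j :: 'w set is the
   degree-j part, A = Om 0, E = Om 1, Omega^2 = Om 2.  The bimodule actions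
   of A are multiplication in 'w.  The complex structure is a ring
   homomorphism c : complex -> A with central image.

   Tensor products  M \<otimes>_R N  (M, N, R subsets of 'w, actions by ring
   multiplication) are built concretely: the free abelian group on M x N
   (finitely supported int-valued functions on pairs) modulo the additive
   subgroup generated by bi-additivity and R-balancing relations.
   An element of the tensor product is represented by a free element;
   two representatives are equal in the tensor product iff their
   difference lies in trel M R N.
   ------------------------------------------------------------------------ *)

type_synonym 'w frtens = "('w \<times> 'w) \<Rightarrow>\<^sub>0 int"

definition tens :: "'w \<Rightarrow> 'w \<Rightarrow> 'w frtens" where
  "tens x y = Poly_Mapping.single (x, y) 1"

definition tfree :: "'w set \<Rightarrow> 'w set \<Rightarrow> 'w frtens set" where
  "tfree M N = {t. Poly_Mapping.keys t \<subseteq> M \<times> N}"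

definition tgen :: "'w::ring set \<Rightarrow> 'w set \<Rightarrow> 'w set \<Rightarrow> 'w frtens set" where
  "tgen M R N =
     {tens (m + m') n - tens m n - tens m' n | m m' n. m \<in> M \<and> m' \<in> M \<and> n \<in> N}
   \<union> {tens m (n + n') - tens m n - tens m n' | m n n'. m \<in> M \<and> n \<in> N \<and> n' \<in> N}
   \<union> {tens (m * r) n - tens m (r * n) | m r n. m \<in> M \<and> r \<in> R \<and> n \<in> N}"

inductive_set addspan :: "'b::ab_group_add set \<Rightarrow> 'b set" for S where
  addspan_zero: "0 \<in> addspan S"
| addspan_base: "x \<in> S \<Longrightarrow> x \<in> addspan S"
| addspan_add: "x \<in> addspan S \<Longrightarrow> y \<in> addspan S \<Longrightarrow> x + y \<in> addspan S"
| addspan_neg: "x \<in> addspan S \<Longrightarrow> - x \<in> addspan S"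

definition trel :: "'w::ring set \<Rightarrow> 'w set \<Rightarrow> 'w set \<Rightarrow> 'w frtens set" where
  "trel M R N = addspan (tgen M R N)"

definition tlift :: "('w::ring_1 \<Rightarrow> 'w \<Rightarrow> 'w) \<Rightarrow> 'w frtens \<Rightarrow> 'w" where
  "tlift f t = (\<Sum>p\<in>Poly_Mapping.keys t. of_int (Poly_Mapping.lookup t p) * f (fst p) (snd p))"

definition tright :: "'w frtens \<Rightarrow> 'w::ring \<Rightarrow> 'w frtens" where
  "tright t a = (\<Sum>p\<in>Poly_Mapping.keys t. Poly_Mapping.single (fst p, snd p * a) (Poly_Mapping.lookup t p))"

definition wedgeT :: "'w::ring_1 frtens \<Rightarrow> 'w" where
  "wedgeT t = tlift (*) t"

definition centre_of :: "'w::ring set \<Rightarrow> 'w set \<Rightarrow> 'w set" where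
  "centre_of M A = {m \<in> M. \<forall>a\<in>A. a * m = m * a}"

definition diff_calculus ::
  "(nat \<Rightarrow> 'w::ring_1 set) \<Rightarrow> ('w \<Rightarrow> 'w) \<Rightarrow> (complex \<Rightarrow> 'w) \<Rightarrow> bool" where
  "diff_calculus Om d c \<longleftrightarrow>
     \<comment> \<open>complex algebra structure on A = Om 0\<close>
     (\<forall>z. c z \<in> Om 0) \<and> c 1 = 1 \<and> (\<forall>z w. c (z + w) = c z + c w) \<and>
     (\<forall>z w. c (z * w) = c z * c w) \<and> (\<forall>z x. c z * x = x * c z) \<and>
     \<comment> \<open>grading: each Om j an additive subgroup, products add degrees\<close>
     (\<forall>j. 0 \<in> Om j \<and> (\<forall>x\<in>Om j. \<forall>y\<in>Om j. x + y \<in> Om j \<and> - x \<in> Om j)) \<and>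
     1 \<in> Om 0 \<and>
     (\<forall>i j. \<forall>x\<in>Om i. \<forall>y\<in>Om j. x * y \<in> Om (i + j)) \<and>
     \<comment> \<open>Omega = direct sum of the Om j\<close>
     (\<forall>x. \<exists>(N::nat) w. (\<forall>j<N. w j \<in> Om j) \<and> x = (\<Sum>j<N. w j)) \<and>
     (\<forall>(N::nat) w. (\<forall>j<N. w j \<in> Om j) \<and> (\<Sum>j<N. w j) = 0 \<longrightarrow> (\<forall>j<N. w j = 0)) \<and>
     \<comment> \<open>d: degree one, additive, complex linear, d^2 = 0, graded Leibniz\<close>
     (\<forall>j. \<forall>x\<in>Om j. d x \<in> Om (Suc j)) \<and>
     (\<forall>x y. d (x + y) = d x + d y) \<and>
     (\<forall>z x. d (c z * x) = c z * d x) \<and>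
     (\<forall>x. d (d x) = 0) \<and>
     (\<forall>i. \<forall>x\<in>Om i. \<forall>y. d (x * y) = d x * y + (-1) ^ i * x * d y) \<and>
     \<comment> \<open>Om j right-spanned by da_0 \<and> ... \<and> da_{j-1}\<close>
     (\<forall>j. \<forall>w\<in>Om j. \<exists>(N::nat) a b. (\<forall>k<N. \<forall>i<j. a k i \<in> Om 0) \<and> (\<forall>k<N. b k \<in> Om 0) \<and>
          w = (\<Sum>k<N. prod_list (map (\<lambda>i. d (a k i)) [0..<j]) * b k))"

text \<open>E = Om 1 is finitely generated projective: p an idempotent n x n matrix
  over A and iota a right-A-linear bijection from E onto p(A^n)
  (vectors are functions nat \<Rightarrow> 'w vanishing from n on).\<close>
definition pA_n :: "(nat \<Rightarrow> 'w::ring_1 set) \<Rightarrow> nat \<Rightarrow> (nat \<Rightarrow> nat \<Rightarrow> 'w) \<Rightarrow> (nat \<Rightarrow> 'w) set" where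
  "pA_n Om n p = {v. (\<forall>k<n. v k \<in> Om 0) \<and> (\<forall>k\<ge>n. v k = 0) \<and>
                     (\<forall>i<n. (\<Sum>k<n. p i k * v k) = v i)}"

definition fg_projective ::
  "(nat \<Rightarrow> 'w::ring_1 set) \<Rightarrow> nat \<Rightarrow> (nat \<Rightarrow> nat \<Rightarrow> 'w) \<Rightarrow> ('w \<Rightarrow> nat \<Rightarrow> 'w) \<Rightarrow> bool" where
  "fg_projective Om n p iota \<longleftrightarrow>
     (\<forall>i<n. \<forall>j<n. p i j \<in> Om 0) \<and>
     (\<forall>i<n. \<forall>j<n. (\<Sum>k<n. p i k * p k j) = p i j) \<and>
     bij_betw iota (Om 1) (pA_n Om n p) \<and>
     (\<forall>x\<in>Om 1. \<forall>y\<in>Om 1. iota (x + y) = (\<lambda>k. iota x k + iota y k)) \<and>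
     (\<forall>x\<in>Om 1. \<forall>a\<in>Om 0. iota (x * a) = (\<lambda>k. iota x k * a))"

text \<open>Phi_j = p(e_j), viewed in E via iota.\<close>
definition Phi :: "(nat \<Rightarrow> 'w::ring_1 set) \<Rightarrow> nat \<Rightarrow> (nat \<Rightarrow> nat \<Rightarrow> 'w) \<Rightarrow> ('w \<Rightarrow> nat \<Rightarrow> 'w) \<Rightarrow> nat \<Rightarrow> 'w" where
  "Phi Om n p iota j = inv_into (Om 1) iota (\<lambda>k. if k < n then p k j else 0)"

text \<open>Grassmann connection: nabla^Gr (sum_j Phi_j a_j) = sum_j Phi_j \<otimes> d a_j,
  where (a_j) = iota omega \<in> p(A^n).\<close>
definition nablaGr :: "(nat \<Rightarrow> 'w::ring_1 set) \<Rightarrow> ('w \<Rightarrow> 'w) \<Rightarrow> nat \<Rightarrow> (nat \<Rightarrow> nat \<Rightarrow> 'w)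
    \<Rightarrow> ('w \<Rightarrow> nat \<Rightarrow> 'w) \<Rightarrow> 'w \<Rightarrow> 'w frtens" where
  "nablaGr Om d n p iota \<omega> = (\<Sum>j<n. tens (Phi Om n p iota j) (d (iota \<omega> j)))"

text \<open>Condition (1): the canonical map Z(E) \<otimes>_{Z(A)} A \<rightarrow> E, z \<otimes> a \<mapsto> z a, is bijective.\<close>
definition cond_central_basis :: "(nat \<Rightarrow> 'w::ring_1 set) \<Rightarrow> bool" where
  "cond_central_basis Om \<longleftrightarrow>
     (let ZE = centre_of (Om 1) (Om 0); ZA = centre_of (Om 0) (Om 0) in
       (\<forall>\<omega>\<in>Om 1. \<exists>t\<in>tfree ZE (Om 0). wedgeT t = \<omega>) \<and>
       (\<forall>t\<in>tfree ZE (Om 0). wedgeT t = 0 \<longrightarrow> t \<in> trel ZE ZA (Om 0)))"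

text \<open>Condition (2) together with P_sym: E \<otimes>_A E = ker(wedge) \<oplus> F (F a right
  A-submodule), Q = wedge|_F : F \<rightarrow> Omega^2 bijective, and psym the idempotent
  (additive, well defined on the quotient) with image ker(wedge) and kernel F.\<close>
definition cond_split ::
  "(nat \<Rightarrow> 'w::ring_1 set) \<Rightarrow> 'w frtens set \<Rightarrow> ('w frtens \<Rightarrow> 'w frtens) \<Rightarrow> bool" where
  "cond_split Om F psym \<longleftrightarrow>
     (let T = tfree (Om 1) (Om 1); R = trel (Om 1) (Om 0) (Om 1) in
       \<comment> \<open>F is a right A-submodule of E \<otimes>_A E (saturated w.r.t. R)\<close>
       F \<subseteq> T \<and> 0 \<in> F \<and> (\<forall>x\<in>F. \<forall>y\<in>F. x + y \<in> F \<and> - x \<in> F) \<and>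
       (\<forall>x\<in>F. \<forall>a\<in>Om 0. tright x a \<in> F) \<and>
       (\<forall>x\<in>F. \<forall>y\<in>T. x - y \<in> R \<longrightarrow> y \<in> F) \<and>
       \<comment> \<open>direct sum ker(wedge) + F\<close>
       (\<forall>x\<in>T. \<exists>k\<in>T. \<exists>f\<in>F. wedgeT k = 0 \<and> x - (k + f) \<in> R) \<and>
       (\<forall>f\<in>F. wedgeT f = 0 \<longrightarrow> f \<in> R) \<and>
       \<comment> \<open>Q = wedge restricted to F is onto Omega^2 (injective by the above)\<close>
       (\<forall>w\<in>Om 2. \<exists>f\<in>F. wedgeT f = w) \<and>
       \<comment> \<open>P_sym\<close>
       (\<forall>x\<in>T. psym x \<in> T) \<and>
       (\<forall>x\<in>T. \<forall>y\<in>T. psym (x + y) - (psym x + psym y) \<in> R) \<and>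
       (\<forall>x\<in>R. psym x \<in> R) \<and>
       (\<forall>x\<in>T. psym (psym x) - psym x \<in> R) \<and>
       (\<forall>x\<in>T. wedgeT (psym x) = 0) \<and>
       (\<forall>k\<in>T. wedgeT k = 0 \<longrightarrow> (\<exists>x\<in>T. psym x - k \<in> R)) \<and>
       (\<forall>x\<in>T. psym x \<in> R \<longleftrightarrow> x \<in> F))"

definition sigmaT :: "('w frtens \<Rightarrow> 'w frtens) \<Rightarrow> 'w frtens \<Rightarrow> 'w::ring frtens" where
  "sigmaT psym t = psym t + psym t - t"

definition cond_flip :: "(nat \<Rightarrow> 'w::ring_1 set) \<Rightarrow> ('w frtens \<Rightarrow> 'w frtens) \<Rightarrow> bool" where
  "cond_flip Om psym \<longleftrightarrow>
     (\<forall>\<omega>\<in>centre_of (Om 1) (Om 0). \<forall>\<eta>\<in>centre_of (Om 1) (Om 0).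
        sigmaT psym (tens \<omega> \<eta>) - tens \<eta> \<omega> \<in> trel (Om 1) (Om 0) (Om 1))"

text \<open>A pseudo-Riemannian bilinear metric, given by the balanced bi-additive map
  g (x, y) = g(x \<otimes> y) (universal property of \<otimes>_A).\<close>
definition pseudo_riem_metric ::
  "(nat \<Rightarrow> 'w::ring_1 set) \<Rightarrow> ('w frtens \<Rightarrow> 'w frtens) \<Rightarrow> ('w \<Rightarrow> 'w \<Rightarrow> 'w) \<Rightarrow> bool" where
  "pseudo_riem_metric Om psym g \<longleftrightarrow>
     (\<forall>x\<in>Om 1. \<forall>y\<in>Om 1. g x y \<in> Om 0) \<and>
     (\<forall>x\<in>Om 1. \<forall>x'\<in>Om 1. \<forall>y\<in>Om 1. g (x + x') y = g x y + g x' y) \<and>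
     (\<forall>x\<in>Om 1. \<forall>y\<in>Om 1. \<forall>y'\<in>Om 1. g x (y + y') = g x y + g x y') \<and>
     (\<forall>x\<in>Om 1. \<forall>y\<in>Om 1. \<forall>a\<in>Om 0. g (x * a) y = g x (a * y)) \<and>
     (\<forall>x\<in>Om 1. \<forall>y\<in>Om 1. \<forall>a\<in>Om 0. g (a * x) y = a * g x y) \<and>
     (\<forall>x\<in>Om 1. \<forall>y\<in>Om 1. \<forall>a\<in>Om 0. g x (y * a) = g x y * a) \<and>
     (\<forall>t\<in>tfree (Om 1) (Om 1). tlift g (sigmaT psym t) = tlift g t) \<and>
     (\<forall>\<phi>. (\<forall>x\<in>Om 1. \<phi> x \<in> Om 0) \<and>
          (\<forall>x\<in>Om 1. \<forall>y\<in>Om 1. \<phi> (x + y) = \<phi> x + \<phi> y) \<and>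
          (\<forall>x\<in>Om 1. \<forall>a\<in>Om 0. \<phi> (x * a) = \<phi> x * a)
        \<longrightarrow> (\<exists>!e. e \<in> Om 1 \<and> (\<forall>x\<in>Om 1. g e x = \<phi> x)))"

definition Qinv :: "'w frtens set \<Rightarrow> 'w::ring_1 \<Rightarrow> 'w frtens" where
  "Qinv F w = (SOME f. f \<in> F \<and> wedgeT f = w)"

definition nabla0 :: "(nat \<Rightarrow> 'w::ring_1 set) \<Rightarrow> ('w \<Rightarrow> 'w) \<Rightarrow> nat \<Rightarrow> (nat \<Rightarrow> nat \<Rightarrow> 'w)
    \<Rightarrow> ('w \<Rightarrow> nat \<Rightarrow> 'w) \<Rightarrow> 'w frtens set \<Rightarrow> 'w \<Rightarrow> 'w frtens" where
  "nabla0 Om d n p iota F \<omega> =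
     nablaGr Om d n p iota \<omega> - Qinv F (wedgeT (nablaGr Om d n p iota \<omega>) + d \<omega>)"

definition Gmap :: "('w::ring_1 \<Rightarrow> 'w \<Rightarrow> 'w) \<Rightarrow> 'w \<Rightarrow> 'w \<Rightarrow> 'w frtens \<Rightarrow> 'w" where
  "Gmap g \<alpha> \<beta> t = tlift (\<lambda>x y. g \<alpha> x * g \<beta> y) t"

definition psi :: "(nat \<Rightarrow> 'w::ring_1 set) \<Rightarrow> ('w \<Rightarrow> 'w) \<Rightarrow> nat \<Rightarrow> (nat \<Rightarrow> nat \<Rightarrow> 'w)
    \<Rightarrow> ('w \<Rightarrow> nat \<Rightarrow> 'w) \<Rightarrow> 'w frtens set \<Rightarrow> ('w frtens \<Rightarrow> 'w frtens) \<Rightarrow> ('w \<Rightarrow> 'w \<Rightarrow> 'w)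
    \<Rightarrow> 'w \<Rightarrow> 'w \<Rightarrow> 'w \<Rightarrow> 'w" where
  "psi Om d n p iota F psym g \<omega> \<theta> \<eta> =
     (let oms = (\<lambda>x. nabla0 Om d n p iota F x - sigmaT psym (nabla0 Om d n p iota F x)) in
       g \<omega> (d (g \<eta> \<theta>)) - g \<eta> (d (g \<theta> \<omega>)) + g \<theta> (d (g \<omega> \<eta>))
       - Gmap g \<eta> \<theta> (oms \<omega>) + Gmap g \<omega> \<theta> (oms \<eta>) - Gmap g \<eta> \<omega> (oms \<theta>))"

end

theory Submission imports Defs begin
declare One_nat_def [simp del]

lemma tens_frag: "tens x y = frag_of (x, y)"
  by (simp add: tens_def)

lemma keys_tens[simp]: "Poly_Mapping.keys (tens x y) = {(x,y)}"
  by (simp add: tens_def)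

lemma lin_sum_add:
  fixes h :: "'a \<Rightarrow> int \<Rightarrow> 'b::ab_group_add"
  assumes h0: "\<And>q. h q 0 = 0" and hadd: "\<And>q k l. h q (k + l) = h q k + h q l"
  shows "(\<Sum>q\<in>Poly_Mapping.keys (a+b). h q (Poly_Mapping.lookup (a+b) q))
       = (\<Sum>q\<in>Poly_Mapping.keys a. h q (Poly_Mapping.lookup a q)) + (\<Sum>q\<in>Poly_Mapping.keys b. h q (Poly_Mapping.lookup b q))"
proof -
  let ?K = "Poly_Mapping.keys a \<union> Poly_Mapping.keys b"
  have fin: "finite ?K" by simp
  have *: "(\<Sum>q\<in>Poly_Mapping.keys c. h q (Poly_Mapping.lookup c q)) = (\<Sum>q\<in>?K. h q (Poly_Mapping.lookup c q))"
    if "Poly_Mapping.keys c \<subseteq> ?K" for c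
    by (rule sum.mono_neutral_left) (use that h0 in \<open>auto simp: in_keys_iff\<close>)
  have "(\<Sum>q\<in>Poly_Mapping.keys (a+b). h q (Poly_Mapping.lookup (a+b) q)) = (\<Sum>q\<in>?K. h q (Poly_Mapping.lookup (a+b) q))"
    by (rule *) (rule keys_add)
  also have "\<dots> = (\<Sum>q\<in>?K. h q (Poly_Mapping.lookup a q)) + (\<Sum>q\<in>?K. h q (Poly_Mapping.lookup b q))"
    by (simp add: lookup_add hadd sum.distrib)
  also have "\<dots> = (\<Sum>q\<in>Poly_Mapping.keys a. h q (Poly_Mapping.lookup a q)) + (\<Sum>q\<in>Poly_Mapping.keys b. h q (Poly_Mapping.lookup b q))"
    by (subst (1 2) *[symmetric]) auto
  finally show ?thesis .
qed

lemma tlift_add: "tlift f (a + b) = tlift f a + tlift f b"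
  unfolding tlift_def by (rule lin_sum_add) (auto simp: distrib_right)

lemma tlift_zero[simp]: "tlift f 0 = 0"
  by (simp add: tlift_def)

lemma tlift_minus: "tlift f (- a) = - tlift f a"
  by (metis add_eq_0_iff2 tlift_add tlift_zero neg_eq_iff_add_eq_0)

lemma tlift_diff: "tlift f (a - b) = tlift f a - tlift f b"
  by (metis diff_conv_add_uminus tlift_add tlift_minus)

lemma tlift_tens[simp]: "tlift f (tens x y) = f x y"
  by (simp add: tlift_def tens_def)

lemma tright_frag: "tright t a = frag_extend (\<lambda>q. frag_of (fst q, snd q * a)) t"
  unfolding tright_def frag_extend_def
  by (rule sum.cong) (auto simp: frag_cmul_def poly_mapping_eqI lookup_single when_def)

lemma tright_add: "tright (x + y) a = tright x a + tright y a"
  by (simp add: tright_frag frag_extend_add)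
lemma tright_diff: "tright (x - y) a = tright x a - tright y a"
  by (simp add: tright_frag frag_extend_diff)
lemma tright_minus: "tright (- y) a = - tright y a"
  by (simp add: tright_frag frag_extend_minus)
lemma tright_zero[simp]: "tright 0 a = 0"
  by (simp add: tright_frag)
lemma tright_tens[simp]: "tright (tens x y) a = tens x (y * a)"
  by (simp add: tright_frag tens_frag)

lemma tlift_tright: "tlift (\<lambda>x y. f x y) (tright t a) = tlift (\<lambda>x y. f x (y * a)) t"
proof -
  have "Poly_Mapping.keys t \<subseteq> UNIV" by simp
  then show ?thesis
  proof (induction t rule: frag_induction)
    case zero then show ?case by simp
  next
    case (one x) then show ?case by (cases x) (simp add: tens_frag[symmetric])
  next
    case (diff a b) then show ?case by (simp add: tright_diff tlift_diff)
  qed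
qed

lemma addspan_diff: "x \<in> addspan S \<Longrightarrow> y \<in> addspan S \<Longrightarrow> x - y \<in> addspan S"
  by (metis addspan_add addspan_neg diff_conv_add_uminus)

lemma sum_closed:
  assumes "finite K" "P 0" "\<And>x y. P x \<Longrightarrow> P y \<Longrightarrow> P (x + y)" "\<And>k. k \<in> K \<Longrightarrow> P (f k)"
  shows "P (sum f K)"
  using assms by (induction K rule: finite_induct) auto

lemma comm_id:
  fixes a p1 q1 p2 q2 e :: "'a::ring"
  assumes "a * p1 = p1 * a" "a * q1 = q1 * a" "a * p2 = p2 * a" "a * q2 = q2 * a"
  shows "a * (p1 * (q1 * e) - p2 * (q2 * e)) - (p1 * (q1 * e) - p2 * (q2 * e)) * a
       = p1 * (q1 * (a * e - e * a)) - p2 * (q2 * (a * e - e * a))"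
proof -
  have h1: "a * (p1 * (q1 * e)) = p1 * (q1 * (a * e))" by (metis assms(1,2) mult.assoc)
  have h2: "a * (p2 * (q2 * e)) = p2 * (q2 * (a * e))" by (metis assms(3,4) mult.assoc)
  show ?thesis by (simp add: right_diff_distrib left_diff_distrib mult.assoc h1 h2)
qed

locale lc =
  fixes Om :: "nat \<Rightarrow> 'w::ring_1 set"
    and d :: "'w \<Rightarrow> 'w" and c :: "complex \<Rightarrow> 'w"
    and n :: nat and p :: "nat \<Rightarrow> nat \<Rightarrow> 'w" and iota :: "'w \<Rightarrow> nat \<Rightarrow> 'w"
    and F :: "'w frtens set" and psym :: "'w frtens \<Rightarrow> 'w frtens"
    and g :: "'w \<Rightarrow> 'w \<Rightarrow> 'w"
  assumes dc: "diff_calculus Om d c"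
    and fg: "fg_projective Om n p iota"
    and cb: "cond_central_basis Om"
    and cs: "cond_split Om F psym"
    and cf: "cond_flip Om psym"
    and pm: "pseudo_riem_metric Om psym g"
begin

abbreviation "AA \<equiv> Om 0"
abbreviation "EE \<equiv> Om 1"
abbreviation "TT \<equiv> tfree EE EE"
abbreviation "RR \<equiv> trel EE AA EE"
abbreviation "ZE \<equiv> centre_of EE AA"
abbreviation "ZA \<equiv> centre_of AA AA"

lemmas dcs = dc[unfolded diff_calculus_def]
lemmas cA0 = dcs[THEN conjunct1]
lemmas c10 = dcs[THEN conjunct2, THEN conjunct1]
lemmas cadd0 = dcs[THEN conjunct2, THEN conjunct2, THEN conjunct1]
lemmas omgrp0 = dcs[THEN conjunct2, THEN conjunct2, THEN conjunct2, THEN conjunct2, THEN conjunct2, THEN conjunct1]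
lemmas one0 = dcs[THEN conjunct2, THEN conjunct2, THEN conjunct2, THEN conjunct2, THEN conjunct2, THEN conjunct2, THEN conjunct1]
lemmas omul0 = dcs[THEN conjunct2, THEN conjunct2, THEN conjunct2, THEN conjunct2, THEN conjunct2, THEN conjunct2, THEN conjunct2, THEN conjunct1]
lemmas ddeg0 = dcs[THEN conjunct2, THEN conjunct2, THEN conjunct2, THEN conjunct2, THEN conjunct2, THEN conjunct2, THEN conjunct2, THEN conjunct2, THEN conjunct2, THEN conjunct2, THEN conjunct1]
lemmas leib0 = dcs[THEN conjunct2, THEN conjunct2, THEN conjunct2, THEN conjunct2, THEN conjunct2, THEN conjunct2, THEN conjunct2, THEN conjunct2, THEN conjunct2, THEN conjunct2, THEN conjunct2, THEN conjunct2, THEN conjunct2, THEN conjunct2, THEN conjunct1]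

lemma Om_zero: "0 \<in> Om j" using omgrp0 by blast
lemma Om_add: "x \<in> Om j \<Longrightarrow> y \<in> Om j \<Longrightarrow> x + y \<in> Om j" using omgrp0 by blast
lemma Om_neg: "x \<in> Om j \<Longrightarrow> - x \<in> Om j" using omgrp0 by blast
lemma Om_diff: "x \<in> Om j \<Longrightarrow> y \<in> Om j \<Longrightarrow> x - y \<in> Om j" by (metis Om_add Om_neg diff_conv_add_uminus)
lemma Om_mul: "x \<in> Om i \<Longrightarrow> y \<in> Om j \<Longrightarrow> x * y \<in> Om (i + j)" using omul0 by blast
lemma A_one: "1 \<in> AA" using one0 .
lemma AA_mul: "x \<in> AA \<Longrightarrow> y \<in> AA \<Longrightarrow> x * y \<in> AA" using Om_mul[of x 0 y 0] by simp
lemma EA_mul: "x \<in> EE \<Longrightarrow> y \<in> AA \<Longrightarrow> x * y \<in> EE" using Om_mul[of x 1 y 0] by simp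
lemma AE_mul: "x \<in> AA \<Longrightarrow> y \<in> EE \<Longrightarrow> x * y \<in> EE" using Om_mul[of x 0 y 1] by simp
lemma EE_mul: "x \<in> EE \<Longrightarrow> y \<in> EE \<Longrightarrow> x * y \<in> Om 2" using Om_mul[of x 1 y 1] by (simp add: numeral_2_eq_2)
lemma A2_mul: "x \<in> AA \<Longrightarrow> y \<in> Om 2 \<Longrightarrow> x * y \<in> Om 2" using Om_mul[of x 0 y 2] by (simp add: numeral_2_eq_2)
lemma d_deg: "x \<in> Om j \<Longrightarrow> d x \<in> Om (Suc j)" using ddeg0 by blast
lemma d_A: "x \<in> AA \<Longrightarrow> d x \<in> EE" using d_deg[of x 0] by (simp add: One_nat_def)
lemma d_E: "x \<in> EE \<Longrightarrow> d x \<in> Om 2" using d_deg[of x 1] by (simp add: numeral_2_eq_2)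
lemma leib: "x \<in> Om i \<Longrightarrow> d (x * y) = d x * y + (-1) ^ i * x * d y" using leib0 by blast
lemma c_A: "c z \<in> AA" using cA0 by blast
lemma c_one: "c 1 = 1" using c10 .
lemma c_add: "c (z + w) = c z + c w" using cadd0 by blast

lemma of_int_Om0: "of_int k \<in> AA"
proof (induction k rule: int_induct[where k=0])
  case base then show ?case by (simp add: Om_zero)
next
  case (step1 i) then show ?case by (simp add: Om_add A_one)
next
  case (step2 i) then show ?case using Om_diff[OF step2(2) A_one] by simp
qed

lemma half: "(x::'w) + x = 0 \<Longrightarrow> x = 0"
proof -
  assume h: "x + x = 0"
  have "c (1/2) + c (1/2) = 1" using c_add[of "1/2" "1/2"] c_one by simp
  then have "x = x * (c (1/2) + c (1/2))" by simp
  also have "\<dots> = (x + x) * c (1/2)" by (simp add: distrib_left distrib_right)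
  finally show "x = 0" using h by simp
qed

lemma R_def': "RR = addspan (tgen EE AA EE)" by (simp add: trel_def)
lemma R_zero: "0 \<in> RR" by (simp add: trel_def addspan_zero)
lemma R_add: "x \<in> RR \<Longrightarrow> y \<in> RR \<Longrightarrow> x + y \<in> RR" by (simp add: trel_def addspan_add)
lemma R_neg: "x \<in> RR \<Longrightarrow> - x \<in> RR" by (simp add: trel_def addspan_neg)
lemma R_diff: "x \<in> RR \<Longrightarrow> y \<in> RR \<Longrightarrow> x - y \<in> RR" by (simp add: trel_def addspan_diff)
lemma R_gen: "x \<in> tgen EE AA EE \<Longrightarrow> x \<in> RR" by (simp add: trel_def addspan_base)

lemma T_tens: "x \<in> EE \<Longrightarrow> y \<in> EE \<Longrightarrow> tens x y \<in> TT" by (simp add: tfree_def)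
lemma T_zero: "0 \<in> TT" by (simp add: tfree_def)
lemma T_add: assumes "x \<in> TT" "y \<in> TT" shows "x + y \<in> TT"
proof -
  have "Poly_Mapping.keys x \<union> Poly_Mapping.keys y \<subseteq> EE \<times> EE" using assms by (simp add: tfree_def)
  with keys_add[of x y] have "Poly_Mapping.keys (x + y) \<subseteq> EE \<times> EE" by (rule order_trans)
  then show ?thesis by (simp add: tfree_def)
qed
lemma T_neg: "x \<in> TT \<Longrightarrow> - x \<in> TT" unfolding tfree_def by simp
lemma T_diff: "x \<in> TT \<Longrightarrow> y \<in> TT \<Longrightarrow> x - y \<in> TT" using T_add[OF _ T_neg, of x y] by simp

lemma tgen_T: assumes "x \<in> tgen EE AA EE" shows "x \<in> TT"
proof -
  from assms consider (a) m m' y where "x = tens (m + m') y - tens m y - tens m' y" "m \<in> EE" "m' \<in> EE" "y \<in> EE"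
    | (b) m y y' where "x = tens m (y + y') - tens m y - tens m y'" "m \<in> EE" "y \<in> EE" "y' \<in> EE"
    | (c) m r y where "x = tens (m * r) y - tens m (r * y)" "m \<in> EE" "r \<in> AA" "y \<in> EE"
    unfolding tgen_def by blast
  then show ?thesis
  proof cases
    case a then show ?thesis by (blast intro: T_diff T_tens Om_add)
  next
    case b then show ?thesis by (blast intro: T_diff T_tens Om_add)
  next
    case c then show ?thesis by (blast intro: T_diff T_tens EA_mul AE_mul)
  qed
qed

lemma R_T: "x \<in> RR \<Longrightarrow> x \<in> TT"
  unfolding trel_def by (induction rule: addspan.induct) (blast intro: T_zero T_add T_neg tgen_T)+

lemma tlift_R:
  assumes a1: "\<And>m m' y. m \<in> EE \<Longrightarrow> m' \<in> EE \<Longrightarrow> y \<in> EE \<Longrightarrow> f (m + m') y = f m y + f m' y"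
    and a2: "\<And>m y y'. m \<in> EE \<Longrightarrow> y \<in> EE \<Longrightarrow> y' \<in> EE \<Longrightarrow> f m (y + y') = f m y + f m y'"
    and a3: "\<And>m r y. m \<in> EE \<Longrightarrow> r \<in> AA \<Longrightarrow> y \<in> EE \<Longrightarrow> f (m * r) y = f m (r * y)"
    and t: "t \<in> RR"
  shows "tlift f t = 0"
  using t unfolding trel_def
proof (induction rule: addspan.induct)
  case (addspan_base x)
  then show ?case unfolding tgen_def by (auto simp: tlift_diff a1 a2 a3)
qed (auto simp: tlift_add tlift_minus)

lemma tright_T: "t \<in> TT \<Longrightarrow> a \<in> AA \<Longrightarrow> tright t a \<in> TT"
proof -
  assume t: "t \<in> TT" and a: "a \<in> AA"
  have "Poly_Mapping.keys t \<subseteq> EE \<times> EE" using t by (simp add: tfree_def)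
  then show ?thesis
  proof (induction t rule: frag_induction)
    case zero then show ?case by (simp add: T_zero)
  next
    case (one x) then show ?case by (cases x) (auto simp: tens_frag[symmetric] intro!: T_tens EA_mul a)
  next
    case (diff x y) then show ?case by (simp add: tright_diff T_diff)
  qed
qed

lemma tgen_cases:
  assumes "x \<in> tgen EE AA EE"
  obtains (a) m m' y where "x = tens (m + m') y - tens m y - tens m' y" "m \<in> EE" "m' \<in> EE" "y \<in> EE"
    | (b) m y y' where "x = tens m (y + y') - tens m y - tens m y'" "m \<in> EE" "y \<in> EE" "y' \<in> EE"
    | (c) m r y where "x = tens (m * r) y - tens m (r * y)" "m \<in> EE" "r \<in> AA" "y \<in> EE"
  using assms unfolding tgen_def by blast

lemma tgen_a: "m \<in> EE \<Longrightarrow> m' \<in> EE \<Longrightarrow> y \<in> EE \<Longrightarrow> tens (m + m') y - tens m y - tens m' y \<in> tgen EE AA EE"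
  unfolding tgen_def by blast
lemma tgen_b: "m \<in> EE \<Longrightarrow> y \<in> EE \<Longrightarrow> y' \<in> EE \<Longrightarrow> tens m (y + y') - tens m y - tens m y' \<in> tgen EE AA EE"
  unfolding tgen_def by blast
lemma tgen_c: "m \<in> EE \<Longrightarrow> r \<in> AA \<Longrightarrow> y \<in> EE \<Longrightarrow> tens (m * r) y - tens m (r * y) \<in> tgen EE AA EE"
  unfolding tgen_def by blast

lemma tright_R: assumes "t \<in> RR" "a \<in> AA" shows "tright t a \<in> RR"
  using assms(1) unfolding trel_def
proof (induction rule: addspan.induct)
  case (addspan_base x)
  then show ?case
  proof (cases rule: tgen_cases)
    case (a m m' y)
    then show ?thesis using tgen_a[of m m' "y * a"] EA_mul[OF _ assms(2)]
      by (simp add: tright_diff addspan.addspan_base)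
  next
    case (b m y y')
    then show ?thesis using tgen_b[of m "y * a" "y' * a"] EA_mul[OF _ assms(2)]
      by (simp add: tright_diff addspan.addspan_base distrib_right)
  next
    case (c m r y)
    then show ?thesis using tgen_c[of m r "y * a"] EA_mul[OF _ assms(2)]
      by (simp add: tright_diff addspan.addspan_base mult.assoc)
  qed
qed (auto simp: tright_add tright_minus intro: addspan.intros)

lemma wedge_R: "t \<in> RR \<Longrightarrow> wedgeT t = 0"
  unfolding wedgeT_def by (rule tlift_R) (auto simp: distrib_left distrib_right mult.assoc)

lemma wedge_add: "wedgeT (x + y) = wedgeT x + wedgeT y" by (simp add: wedgeT_def tlift_add)
lemma wedge_diff: "wedgeT (x - y) = wedgeT x - wedgeT y" by (simp add: wedgeT_def tlift_diff)
lemma wedge_minus: "wedgeT (- y) = - wedgeT y" by (simp add: wedgeT_def tlift_minus)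
lemma wedge_tens[simp]: "wedgeT (tens x y) = x * y" by (simp add: wedgeT_def)
lemma wedge_tright: "wedgeT (tright t a) = wedgeT t * a"
proof -
  have "Poly_Mapping.keys t \<subseteq> UNIV" by simp
  then show ?thesis
  proof (induction t rule: frag_induction)
    case zero then show ?case by (simp add: wedgeT_def)
  next
    case (one x) then show ?case by (cases x) (simp add: tens_frag[symmetric] mult.assoc)
  next
    case (diff x y) then show ?case by (simp add: tright_diff wedge_diff left_diff_distrib)
  qed
qed


lemmas css = cs[unfolded cond_split_def Let_def]
lemmas csF_T = css[THEN conjunct1]
lemmas csF_0 = css[THEN conjunct2, THEN conjunct1]
lemmas csF_grp = css[THEN conjunct2, THEN conjunct2, THEN conjunct1]
lemmas csF_tright = css[THEN conjunct2, THEN conjunct2, THEN conjunct2, THEN conjunct1]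
lemmas csF_sat = css[THEN conjunct2, THEN conjunct2, THEN conjunct2, THEN conjunct2, THEN conjunct1]
lemmas cs_split = css[THEN conjunct2, THEN conjunct2, THEN conjunct2, THEN conjunct2, THEN conjunct2, THEN conjunct1]
lemmas csF_inj = css[THEN conjunct2, THEN conjunct2, THEN conjunct2, THEN conjunct2, THEN conjunct2, THEN conjunct2, THEN conjunct1]
lemmas cs_onto = css[THEN conjunct2, THEN conjunct2, THEN conjunct2, THEN conjunct2, THEN conjunct2, THEN conjunct2, THEN conjunct2, THEN conjunct1]
lemmas csP_T = css[THEN conjunct2, THEN conjunct2, THEN conjunct2, THEN conjunct2, THEN conjunct2, THEN conjunct2, THEN conjunct2, THEN conjunct2, THEN conjunct1]
lemmas csP_add = css[THEN conjunct2, THEN conjunct2, THEN conjunct2, THEN conjunct2, THEN conjunct2, THEN conjunct2, THEN conjunct2, THEN conjunct2, THEN conjunct2, THEN conjunct1]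
lemmas csP_R = css[THEN conjunct2, THEN conjunct2, THEN conjunct2, THEN conjunct2, THEN conjunct2, THEN conjunct2, THEN conjunct2, THEN conjunct2, THEN conjunct2, THEN conjunct2, THEN conjunct1]
lemmas csP_idem = css[THEN conjunct2, THEN conjunct2, THEN conjunct2, THEN conjunct2, THEN conjunct2, THEN conjunct2, THEN conjunct2, THEN conjunct2, THEN conjunct2, THEN conjunct2, THEN conjunct2, THEN conjunct1]
lemmas csP_wedge = css[THEN conjunct2, THEN conjunct2, THEN conjunct2, THEN conjunct2, THEN conjunct2, THEN conjunct2, THEN conjunct2, THEN conjunct2, THEN conjunct2, THEN conjunct2, THEN conjunct2, THEN conjunct2, THEN conjunct1]
lemmas csP_img = css[THEN conjunct2, THEN conjunct2, THEN conjunct2, THEN conjunct2, THEN conjunct2, THEN conjunct2, THEN conjunct2, THEN conjunct2, THEN conjunct2, THEN conjunct2, THEN conjunct2, THEN conjunct2, THEN conjunct2, THEN conjunct1]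
lemmas csP_F = css[THEN conjunct2, THEN conjunct2, THEN conjunct2, THEN conjunct2, THEN conjunct2, THEN conjunct2, THEN conjunct2, THEN conjunct2, THEN conjunct2, THEN conjunct2, THEN conjunct2, THEN conjunct2, THEN conjunct2, THEN conjunct2]
lemmas pms = pm[unfolded pseudo_riem_metric_def]
lemmas pm_A = pms[THEN conjunct1]
lemmas pm_addl = pms[THEN conjunct2, THEN conjunct1]
lemmas pm_addr = pms[THEN conjunct2, THEN conjunct2, THEN conjunct1]
lemmas pm_bal = pms[THEN conjunct2, THEN conjunct2, THEN conjunct2, THEN conjunct1]
lemmas pm_lA = pms[THEN conjunct2, THEN conjunct2, THEN conjunct2, THEN conjunct2, THEN conjunct1]
lemmas pm_rA = pms[THEN conjunct2, THEN conjunct2, THEN conjunct2, THEN conjunct2, THEN conjunct2, THEN conjunct1]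
lemmas fgs = fg[unfolded fg_projective_def]
lemmas fg_pA = fgs[THEN conjunct1]
lemmas fg_idem = fgs[THEN conjunct2, THEN conjunct1]
lemmas fg_bij = fgs[THEN conjunct2, THEN conjunct2, THEN conjunct1]
lemmas cb1 = cb[unfolded cond_central_basis_def Let_def, THEN conjunct1]

lemma F_T: "x \<in> F \<Longrightarrow> x \<in> TT" using csF_T by blast
lemma F_tright: "x \<in> F \<Longrightarrow> a \<in> AA \<Longrightarrow> tright x a \<in> F" using csF_tright by blast
lemma F_inj: "f \<in> F \<Longrightarrow> wedgeT f = 0 \<Longrightarrow> f \<in> RR" using csF_inj by blast
lemma onto: "w \<in> Om 2 \<Longrightarrow> \<exists>f\<in>F. wedgeT f = w" using cs_onto by blast
lemma P_T: "x \<in> TT \<Longrightarrow> psym x \<in> TT" using csP_T by blast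
lemma P_add: "x \<in> TT \<Longrightarrow> y \<in> TT \<Longrightarrow> psym (x + y) - (psym x + psym y) \<in> RR" using csP_add by blast
lemma P_R: "x \<in> RR \<Longrightarrow> psym x \<in> RR" using csP_R by blast
lemma P_idem: "x \<in> TT \<Longrightarrow> psym (psym x) - psym x \<in> RR" using csP_idem by blast
lemma P_wedge: "x \<in> TT \<Longrightarrow> wedgeT (psym x) = 0" using csP_wedge by blast
lemma P_img: "k \<in> TT \<Longrightarrow> wedgeT k = 0 \<Longrightarrow> \<exists>x\<in>TT. psym x - k \<in> RR" using csP_img by blast
lemma P_F: "x \<in> TT \<Longrightarrow> psym x \<in> RR \<Longrightarrow> x \<in> F" using csP_F by blast

lemma g_A: "x \<in> EE \<Longrightarrow> y \<in> EE \<Longrightarrow> g x y \<in> AA" using pm_A by blast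
lemma g_addl: "x \<in> EE \<Longrightarrow> x' \<in> EE \<Longrightarrow> y \<in> EE \<Longrightarrow> g (x + x') y = g x y + g x' y" using pm_addl by blast
lemma g_addr: "x \<in> EE \<Longrightarrow> y \<in> EE \<Longrightarrow> y' \<in> EE \<Longrightarrow> g x (y + y') = g x y + g x y'" using pm_addr by blast
lemma g_bal: "x \<in> EE \<Longrightarrow> y \<in> EE \<Longrightarrow> a \<in> AA \<Longrightarrow> g (x * a) y = g x (a * y)" using pm_bal by blast
lemma g_lA: "x \<in> EE \<Longrightarrow> y \<in> EE \<Longrightarrow> a \<in> AA \<Longrightarrow> g (a * x) y = a * g x y" using pm_lA by blast
lemma g_rA: "x \<in> EE \<Longrightarrow> y \<in> EE \<Longrightarrow> a \<in> AA \<Longrightarrow> g x (y * a) = g x y * a" using pm_rA by blast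

lemma flip: "z \<in> ZE \<Longrightarrow> z' \<in> ZE \<Longrightarrow> sigmaT psym (tens z z') - tens z' z \<in> RR"
  using cf unfolding cond_flip_def by blast

lemma ZE_E: "z \<in> ZE \<Longrightarrow> z \<in> EE" by (simp add: centre_of_def)
lemma ZE_comm: "z \<in> ZE \<Longrightarrow> a \<in> AA \<Longrightarrow> a * z = z * a" by (simp add: centre_of_def)
lemma ZA_A: "z \<in> ZA \<Longrightarrow> z \<in> AA" by (simp add: centre_of_def)
lemma ZA_comm: "z \<in> ZA \<Longrightarrow> a \<in> AA \<Longrightarrow> a * z = z * a" by (simp add: centre_of_def)
lemma ZA_I: "z \<in> AA \<Longrightarrow> (\<And>a. a \<in> AA \<Longrightarrow> a * z = z * a) \<Longrightarrow> z \<in> ZA" by (simp add: centre_of_def)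
lemma ZE_I: "z \<in> EE \<Longrightarrow> (\<And>a. a \<in> AA \<Longrightarrow> a * z = z * a) \<Longrightarrow> z \<in> ZE" by (simp add: centre_of_def)
lemma ZA_add: "x \<in> ZA \<Longrightarrow> y \<in> ZA \<Longrightarrow> x + y \<in> ZA"
  by (rule ZA_I) (auto simp: ZA_A Om_add, metis ZA_comm distrib_left distrib_right)
lemma ZA_diff: "x \<in> ZA \<Longrightarrow> y \<in> ZA \<Longrightarrow> x - y \<in> ZA"
  by (rule ZA_I) (auto simp: ZA_A Om_diff, metis ZA_comm left_diff_distrib right_diff_distrib)


lemma R_eq: "x \<in> RR \<Longrightarrow> x = y \<Longrightarrow> y \<in> RR" by simp

lemma P_zero: "psym 0 \<in> RR"
proof -
  have "psym (0 + 0) - (psym 0 + psym 0) \<in> RR" by (rule P_add) (simp_all add: T_zero)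
  then have "- psym 0 \<in> RR" by simp
  from R_neg[OF this] show ?thesis by simp
qed

lemma P_diff: "x \<in> TT \<Longrightarrow> y \<in> TT \<Longrightarrow> psym (x - y) - (psym x - psym y) \<in> RR"
proof -
  assume x: "x \<in> TT" and y: "y \<in> TT"
  have "psym ((x - y) + y) - (psym (x - y) + psym y) \<in> RR" by (rule P_add) (simp_all add: T_diff x y)
  from R_neg[OF this] show ?thesis by (simp add: algebra_simps)
qed

lemma P_cong: "x \<in> TT \<Longrightarrow> y \<in> TT \<Longrightarrow> x - y \<in> RR \<Longrightarrow> psym x - psym y \<in> RR"
proof -
  assume x: "x \<in> TT" and y: "y \<in> TT" and r: "x - y \<in> RR"
  have "psym x - psym y = psym (x - y) - (psym (x - y) - (psym x - psym y))" by simp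
  then show ?thesis using R_diff[OF P_R[OF r] P_diff[OF x y]] by simp
qed

lemma P_fix: assumes k: "k \<in> TT" and w: "wedgeT k = 0" shows "psym k - k \<in> RR"
proof -
  obtain x where x: "x \<in> TT" and r: "psym x - k \<in> RR" using P_img[OF k w] by blast
  have r1: "psym k - psym (psym x) \<in> RR"
    using P_cong[OF k P_T[OF x]] R_neg[OF r] by (simp add: algebra_simps)
  have "psym k - k = (psym k - psym (psym x)) + (psym (psym x) - psym x) + (psym x - k)" by simp
  then show ?thesis using R_add[OF R_add[OF r1 P_idem[OF x]] r] by simp
qed

lemma P_rlin: assumes x: "x \<in> TT" and e: "e \<in> AA" shows "psym (tright x e) - tright (psym x) e \<in> RR"
proof -
  define k where "k = psym x"
  define f where "f = x - k"
  have kT: "k \<in> TT" using P_T[OF x] by (simp add: k_def)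
  have fT: "f \<in> TT" using T_diff[OF x kT] by (simp add: f_def)
  have "psym f - (psym x - psym k) \<in> RR" unfolding f_def by (rule P_diff[OF x kT])
  moreover have "psym k - psym x \<in> RR" using P_idem[OF x] by (simp add: k_def)
  ultimately have "(psym f - (psym x - psym k)) - (psym k - psym x) \<in> RR" by (rule R_diff)
  then have "psym f \<in> RR" by simp
  then have fF: "f \<in> F" using P_F[OF fT] by simp
  have tfF: "tright f e \<in> F" by (rule F_tright[OF fF e])
  have pf: "psym (tright f e) \<in> RR" using P_F[OF F_T[OF tfF]] tfF
    using csP_F F_T by blast
  have wk: "wedgeT (tright k e) = 0" using P_wedge[OF x] by (simp add: wedge_tright k_def)
  have pk: "psym (tright k e) - tright k e \<in> RR" by (rule P_fix[OF tright_T[OF kT e] wk])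
  have xe: "tright x e = tright k e + tright f e" by (simp add: f_def tright_add[symmetric])
  have pa: "psym (tright x e) - (psym (tright k e) + psym (tright f e)) \<in> RR"
    unfolding xe by (rule P_add[OF tright_T[OF kT e] tright_T[OF fT e]])
  have "psym (tright x e) - tright (psym x) e
      = (psym (tright x e) - (psym (tright k e) + psym (tright f e))) + (psym (tright k e) - tright k e) + psym (tright f e)"
    by (simp add: k_def)
  then show ?thesis using R_add[OF R_add[OF pa pk] pf] by simp
qed

abbreviation sg where "sg \<equiv> sigmaT psym"

lemma S_T: "x \<in> TT \<Longrightarrow> sg x \<in> TT" unfolding sigmaT_def by (intro T_diff T_add P_T)
lemma S_cong: "x \<in> TT \<Longrightarrow> y \<in> TT \<Longrightarrow> x - y \<in> RR \<Longrightarrow> sg x - sg y \<in> RR"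
proof -
  assume x: "x \<in> TT" and y: "y \<in> TT" and r: "x - y \<in> RR"
  have p: "psym x - psym y \<in> RR" by (rule P_cong[OF x y r])
  have "sg x - sg y = ((psym x - psym y) + (psym x - psym y)) - (x - y)" by (simp add: sigmaT_def algebra_simps)
  then show ?thesis using R_diff[OF R_add[OF p p] r] by simp
qed
lemma S_add: "x \<in> TT \<Longrightarrow> y \<in> TT \<Longrightarrow> sg (x + y) - (sg x + sg y) \<in> RR"
proof -
  assume x: "x \<in> TT" and y: "y \<in> TT"
  have p: "psym (x + y) - (psym x + psym y) \<in> RR" by (rule P_add[OF x y])
  have "sg (x + y) - (sg x + sg y) = (psym (x + y) - (psym x + psym y)) + (psym (x + y) - (psym x + psym y))"
    by (simp add: sigmaT_def algebra_simps)
  then show ?thesis using R_add[OF p p] by simp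
qed
lemma S_zero: "sg 0 \<in> RR"
  unfolding sigmaT_def using R_add[OF P_zero P_zero] by simp
lemma S_neg: "x \<in> TT \<Longrightarrow> sg (- x) + sg x \<in> RR"
proof -
  assume x: "x \<in> TT"
  have h: "sg (- x + x) - (sg (- x) + sg x) \<in> RR" by (rule S_add[OF T_neg[OF x] x])
  have eq: "sg 0 - (sg (- x + x) - (sg (- x) + sg x)) = sg (- x) + sg x" by simp
  show ?thesis by (rule R_eq[OF R_diff[OF S_zero h] eq])
qed
lemma S_diff: "x \<in> TT \<Longrightarrow> y \<in> TT \<Longrightarrow> sg (x - y) - (sg x - sg y) \<in> RR"
proof -
  assume x: "x \<in> TT" and y: "y \<in> TT"
  have "sg ((x - y) + y) - (sg (x - y) + sg y) \<in> RR" by (rule S_add[OF T_diff[OF x y] y])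
  from R_neg[OF this] show ?thesis by (simp add: algebra_simps)
qed
lemma S_rlin: assumes x: "x \<in> TT" and e: "e \<in> AA" shows "sg (tright x e) - tright (sg x) e \<in> RR"
proof -
  have p: "psym (tright x e) - tright (psym x) e \<in> RR" by (rule P_rlin[OF x e])
  have eq: "sg (tright x e) - tright (sg x) e = (psym (tright x e) - tright (psym x) e) + (psym (tright x e) - tright (psym x) e)"
    by (simp add: sigmaT_def tright_add tright_diff algebra_simps)
  show ?thesis unfolding eq by (rule R_add[OF p p])
qed
lemma S_fix: "k \<in> TT \<Longrightarrow> wedgeT k = 0 \<Longrightarrow> sg k - k \<in> RR"
proof -
  assume k: "k \<in> TT" and w: "wedgeT k = 0"
  have p: "psym k - k \<in> RR" by (rule P_fix[OF k w])
  have eq: "sg k - k = (psym k - k) + (psym k - k)" by (simp add: sigmaT_def algebra_simps)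
  show ?thesis unfolding eq by (rule R_add[OF p p])
qed
lemma wedge_S: "x \<in> TT \<Longrightarrow> wedgeT (sg x) = - wedgeT x"
  by (simp add: sigmaT_def wedge_add wedge_diff P_wedge)

lemma flip_e: assumes z: "z \<in> ZE" and z': "z' \<in> ZE" and e: "e \<in> AA"
  shows "sg (tens z (z' * e)) - tens z' (z * e) \<in> RR"
proof -
  have zz: "tens z z' \<in> TT" "tens z' z \<in> TT" using z z' by (simp_all add: T_tens ZE_E)
  have a: "sg (tright (tens z z') e) - tright (sg (tens z z')) e \<in> RR" by (rule S_rlin[OF zz(1) e])
  have b: "tright (sg (tens z z') - tens z' z) e \<in> RR" by (rule tright_R[OF flip[OF z z'] e])
  have eq: "sg (tens z (z' * e)) - tens z' (z * e)
      = (sg (tright (tens z z') e) - tright (sg (tens z z')) e) + tright (sg (tens z z') - tens z' z) e"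
    by (simp add: tright_diff)
  show ?thesis unfolding eq by (rule R_add[OF a b])
qed

lemma anti_ZZ: assumes z: "z \<in> ZE" and z': "z' \<in> ZE" shows "z * z' + z' * z = 0"
proof -
  have "wedgeT (sg (tens z z') - tens z' z) = 0" by (rule wedge_R[OF flip[OF z z']])
  then have "- (z * z') - z' * z = 0" using z z' by (simp add: wedge_diff wedge_S T_tens ZE_E)
  then show ?thesis by (simp add: algebra_simps) (metis add.commute add_eq_0_iff2 neg_eq_iff_add_eq_0)
qed


lemma E_induct:
  assumes x: "x \<in> EE" and P0: "P 0" and Padd: "\<And>u v. P u \<Longrightarrow> P v \<Longrightarrow> P (u + v)"
    and Pgen: "\<And>z r. z \<in> ZE \<Longrightarrow> r \<in> AA \<Longrightarrow> P (z * r)"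
  shows "P x"
proof -
  obtain t where t: "t \<in> tfree ZE AA" and w: "wedgeT t = x" using bspec[OF cb1 x] by (elim bexE) blast
  have eq: "wedgeT t = (\<Sum>q\<in>Poly_Mapping.keys t. of_int (Poly_Mapping.lookup t q) * (fst q * snd q))"
    by (simp add: wedgeT_def tlift_def)
  have "P (\<Sum>q\<in>Poly_Mapping.keys t. of_int (Poly_Mapping.lookup t q) * (fst q * snd q))"
  proof (rule sum_closed)
    fix q assume q: "q \<in> Poly_Mapping.keys t"
    then have z: "fst q \<in> ZE" and r: "snd q \<in> AA" using t by (auto simp: tfree_def)
    have "of_int (Poly_Mapping.lookup t q) * (fst q * snd q) = (of_int (Poly_Mapping.lookup t q) * fst q) * snd q"
      by (rule mult.assoc[symmetric])
    also have "\<dots> = (fst q * of_int (Poly_Mapping.lookup t q)) * snd q"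
      by (simp only: mult_of_int_commute)
    also have "\<dots> = fst q * (of_int (Poly_Mapping.lookup t q) * snd q)"
      by (rule mult.assoc)
    finally have "of_int (Poly_Mapping.lookup t q) * (fst q * snd q) = fst q * (of_int (Poly_Mapping.lookup t q) * snd q)" .
    then show "P (of_int (Poly_Mapping.lookup t q) * (fst q * snd q))"
      using Pgen[OF z AA_mul[OF of_int_Om0 r]] by simp
  next
    show "finite (Poly_Mapping.keys t)" by simp
  next
    show "P 0" by (rule P0)
  next
    fix u v assume "P u" "P v" then show "P (u + v)" by (rule Padd)
  qed
  then show ?thesis using eq w by simp
qed

lemma T_induct:
  assumes t: "t \<in> TT" and S0: "S 0"
    and Sadd: "\<And>x y. x \<in> TT \<Longrightarrow> y \<in> TT \<Longrightarrow> S x \<Longrightarrow> S y \<Longrightarrow> S (x + y)"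
    and Sneg: "\<And>x. x \<in> TT \<Longrightarrow> S x \<Longrightarrow> S (- x)"
    and Ssat: "\<And>x y. x \<in> TT \<Longrightarrow> y \<in> TT \<Longrightarrow> S x \<Longrightarrow> x - y \<in> RR \<Longrightarrow> S y"
    and Sgen: "\<And>z z' e. z \<in> ZE \<Longrightarrow> z' \<in> ZE \<Longrightarrow> e \<in> AA \<Longrightarrow> S (tens z (z' * e))"
  shows "S t"
proof -
  have inner: "S (tens z u)" if z: "z \<in> ZE" and u: "u \<in> EE" for z u
  proof -
    have zE: "z \<in> EE" using z by (rule ZE_E)
    have "u \<in> EE \<and> S (tens z u)"
    proof (rule E_induct[OF u])
      have g: "tens z (0 + 0) - tens z 0 - tens z 0 \<in> RR" by (rule R_gen[OF tgen_b[OF zE Om_zero Om_zero]])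
      have "S (tens z 0)" by (rule Ssat[OF T_zero T_tens[OF zE Om_zero] S0]) (use g in simp)
      then show "0 \<in> EE \<and> S (tens z 0)" by (simp add: Om_zero)
    next
      fix v w assume v: "v \<in> EE \<and> S (tens z v)" and w: "w \<in> EE \<and> S (tens z w)"
      have vE: "v \<in> EE" and wE: "w \<in> EE" using v w by simp_all
      have g: "tens z (v + w) - tens z v - tens z w \<in> RR" by (rule R_gen[OF tgen_b[OF zE vE wE]])
      have s1: "S (tens z v + tens z w)" using Sadd[OF T_tens[OF zE vE] T_tens[OF zE wE]] v w by simp
      have r1: "(tens z v + tens z w) - tens z (v + w) \<in> RR" using R_neg[OF g] by (simp add: algebra_simps)
      have "S (tens z (v + w))" by (rule Ssat[OF T_add[OF T_tens[OF zE vE] T_tens[OF zE wE]] T_tens[OF zE Om_add[OF vE wE]] s1 r1])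
      then show "v + w \<in> EE \<and> S (tens z (v + w))" using v w by (simp add: Om_add)
    next
      fix z' r assume z': "z' \<in> ZE" and r: "r \<in> AA"
      show "z' * r \<in> EE \<and> S (tens z (z' * r))" using Sgen[OF z z' r] EA_mul[OF ZE_E[OF z'] r] by simp
    qed
    then show ?thesis by simp
  qed
  have outer: "S (tens x y)" if x: "x \<in> EE" and y: "y \<in> EE" for x y
  proof -
    have "x \<in> EE \<and> S (tens x y)"
    proof (rule E_induct[OF x])
      have g: "tens (0 + 0) y - tens 0 y - tens 0 y \<in> RR" by (rule R_gen[OF tgen_a[OF Om_zero Om_zero y]])
      have "S (tens 0 y)" by (rule Ssat[OF T_zero T_tens[OF Om_zero y] S0]) (use g in simp)
      then show "0 \<in> EE \<and> S (tens 0 y)" by (simp add: Om_zero)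
    next
      fix v w assume v: "v \<in> EE \<and> S (tens v y)" and w: "w \<in> EE \<and> S (tens w y)"
      have vE: "v \<in> EE" and wE: "w \<in> EE" using v w by simp_all
      have g: "tens (v + w) y - tens v y - tens w y \<in> RR" by (rule R_gen[OF tgen_a[OF vE wE y]])
      have s1: "S (tens v y + tens w y)" using Sadd[OF T_tens[OF vE y] T_tens[OF wE y]] v w by simp
      have r1: "(tens v y + tens w y) - tens (v + w) y \<in> RR" using R_neg[OF g] by (simp add: algebra_simps)
      have "S (tens (v + w) y)" by (rule Ssat[OF T_add[OF T_tens[OF vE y] T_tens[OF wE y]] T_tens[OF Om_add[OF vE wE] y] s1 r1])
      then show "v + w \<in> EE \<and> S (tens (v + w) y)" using v w by (simp add: Om_add)
    next
      fix z r assume z: "z \<in> ZE" and r: "r \<in> AA"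
      have zE: "z \<in> EE" by (rule ZE_E[OF z])
      have ry: "r * y \<in> EE" by (rule AE_mul[OF r y])
      have g: "tens (z * r) y - tens z (r * y) \<in> RR" by (rule R_gen[OF tgen_c[OF zE r y]])
      have "S (tens (z * r) y)"
        by (rule Ssat[OF T_tens[OF zE ry] T_tens[OF EA_mul[OF zE r] y] inner[OF z ry]])
           (use R_neg[OF g] in \<open>simp add: algebra_simps\<close>)
      then show "z * r \<in> EE \<and> S (tens (z * r) y)" using EA_mul[OF zE r] by simp
    qed
    then show ?thesis by simp
  qed
  have "Poly_Mapping.keys t \<subseteq> EE \<times> EE" using t by (simp add: tfree_def)
  then have "t \<in> TT \<and> S t"
  proof (induction t rule: frag_induction)
    case zero then show ?case by (simp add: T_zero S0)
  next
    case (one x)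
    obtain x1 x2 where xx: "x = (x1, x2)" by (cases x)
    have x1: "x1 \<in> EE" and x2: "x2 \<in> EE" using one xx by auto
    have "frag_of x = tens x1 x2" by (simp add: xx tens_frag)
    then show ?case using T_tens[OF x1 x2] outer[OF x1 x2] by simp
  next
    case (diff a b)
    have aT: "a \<in> TT" and Sa: "S a" and bT: "b \<in> TT" and Sb: "S b" using diff by simp_all
    have "S (a + - b)" by (rule Sadd[OF aT T_neg[OF bT] Sa Sneg[OF bT Sb]])
    then show ?case using T_diff[OF aT bT] by simp
  qed
  then show ?thesis by simp
qed


lemma G_add: "Gmap g al be (x + y) = Gmap g al be x + Gmap g al be y" by (simp add: Gmap_def tlift_add)
lemma G_diff: "Gmap g al be (x - y) = Gmap g al be x - Gmap g al be y" by (simp add: Gmap_def tlift_diff)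
lemma G_minus: "Gmap g al be (- y) = - Gmap g al be y" by (simp add: Gmap_def tlift_minus)
lemma G_zero: "Gmap g al be 0 = 0" by (simp add: Gmap_def)
lemma G_tens: "Gmap g al be (tens x y) = g al x * g be y" by (simp add: Gmap_def)

lemma G_R: assumes al: "al \<in> ZE" and be: "be \<in> ZE" and t: "t \<in> RR" shows "Gmap g al be t = 0"
  unfolding Gmap_def
proof (rule tlift_R[OF _ _ _ t])
  have alE: "al \<in> EE" and beE: "be \<in> EE" using al be by (simp_all add: ZE_E)
  fix m m' y assume "m \<in> EE" "m' \<in> EE" "y \<in> EE"
  then show "g al (m + m') * g be y = g al m * g be y + g al m' * g be y"
    by (simp add: g_addr[OF alE] distrib_right)
next
  have alE: "al \<in> EE" and beE: "be \<in> EE" using al be by (simp_all add: ZE_E)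
  fix m y y' assume "m \<in> EE" "y \<in> EE" "y' \<in> EE"
  then show "g al m * g be (y + y') = g al m * g be y + g al m * g be y'"
    by (simp add: g_addr[OF beE] distrib_left)
next
  have alE: "al \<in> EE" and beE: "be \<in> EE" using al be by (simp_all add: ZE_E)
  fix m r y assume m: "m \<in> EE" and r: "r \<in> AA" and y: "y \<in> EE"
  have "g be (r * y) = g (be * r) y" by (rule g_bal[OF beE y r, symmetric])
  also have "\<dots> = g (r * be) y" using ZE_comm[OF be r] by simp
  also have "\<dots> = r * g be y" by (rule g_lA[OF beE y r])
  finally have "g be (r * y) = r * g be y" .
  then show "g al (m * r) * g be y = g al m * g be (r * y)"
    by (simp add: g_rA[OF alE m r] mult.assoc)
qed

lemma G_A: assumes al: "al \<in> EE" and be: "be \<in> EE" and t: "t \<in> TT" shows "Gmap g al be t \<in> AA"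
proof -
  have "Poly_Mapping.keys t \<subseteq> EE \<times> EE" using t by (simp add: tfree_def)
  then show ?thesis
  proof (induction t rule: frag_induction)
    case zero then show ?case by (simp add: G_zero Om_zero)
  next
    case (one x)
    obtain x1 x2 where xx: "x = (x1, x2)" by (cases x)
    have x1: "x1 \<in> EE" and x2: "x2 \<in> EE" using one xx by auto
    have "frag_of x = tens x1 x2" by (simp add: xx tens_frag)
    then show ?case using AA_mul[OF g_A[OF al x1] g_A[OF be x2]] by (simp add: G_tens)
  next
    case (diff a b) then show ?case by (simp add: G_diff Om_diff)
  qed
qed

lemma g_Z: assumes x: "x \<in> ZE" and y: "y \<in> ZE" shows "g x y \<in> ZA"
proof (rule ZA_I)
  show "g x y \<in> AA" using g_A ZE_E x y by blast
next
  fix a assume a: "a \<in> AA"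
  have xE: "x \<in> EE" and yE: "y \<in> EE" using x y by (simp_all add: ZE_E)
  have "a * g x y = g (a * x) y" by (rule g_lA[OF xE yE a, symmetric])
  also have "\<dots> = g (x * a) y" using ZE_comm[OF x a] by simp
  also have "\<dots> = g x (a * y)" by (rule g_bal[OF xE yE a])
  also have "\<dots> = g x (y * a)" using ZE_comm[OF y a] by simp
  also have "\<dots> = g x y * a" by (rule g_rA[OF xE yE a])
  finally show "a * g x y = g x y * a" .
qed

definition Good where
  "Good al be t \<longleftrightarrow> (\<forall>a\<in>AA. \<exists>Y\<in>TT.
      a * Gmap g al be (t - sg t) - Gmap g al be (t - sg t) * a = Gmap g al be Y \<and>
      wedgeT Y = a * wedgeT (t - sg t) - wedgeT (t - sg t) * a \<and> sg Y + Y \<in> RR)"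

lemma Good_sat:
  assumes al: "al \<in> ZE" and be: "be \<in> ZE" and x: "x \<in> TT" and y: "y \<in> TT"
    and gx: "Good al be x" and r: "x - y \<in> RR"
  shows "Good al be y"
proof -
  have rr: "(x - sg x) - (y - sg y) \<in> RR"
  proof -
    have eq: "(x - y) - (sg x - sg y) = (x - sg x) - (y - sg y)" by (simp add: algebra_simps)
    show ?thesis by (rule R_eq[OF R_diff[OF r S_cong[OF x y r]] eq])
  qed
  have "Gmap g al be (x - sg x) - Gmap g al be (y - sg y) = 0"
    by (rule trans[OF G_diff[symmetric] G_R[OF al be rr]])
  then have e1: "Gmap g al be (x - sg x) = Gmap g al be (y - sg y)"
    by (simp only: right_minus_eq)
  have "wedgeT (x - sg x) - wedgeT (y - sg y) = 0"
    by (rule trans[OF wedge_diff[symmetric] wedge_R[OF rr]])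
  then have e2: "wedgeT (x - sg x) = wedgeT (y - sg y)"
    by (simp only: right_minus_eq)
  show ?thesis using gx unfolding Good_def e1 e2 .
qed

lemma Good_zero: assumes al: "al \<in> ZE" and be: "be \<in> ZE" shows "Good al be 0"
  unfolding Good_def
proof (intro ballI bexI[of _ 0] conjI)
  fix a
  have "Gmap g al be (0 - sg 0) = 0" using G_R[OF al be S_zero] by (simp add: G_minus)
  then show "a * Gmap g al be (0 - sg 0) - Gmap g al be (0 - sg 0) * a = Gmap g al be 0" by (simp add: G_zero)
  have "wedgeT (0 - sg 0) = 0" using wedge_R[OF S_zero] by (simp add: wedge_minus)
  then show "wedgeT 0 = a * wedgeT (0 - sg 0) - wedgeT (0 - sg 0) * a" by (simp add: wedgeT_def)
  show "sg 0 + 0 \<in> RR" using S_zero by simp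
qed (rule T_zero)

lemma Good_add:
  assumes al: "al \<in> ZE" and be: "be \<in> ZE" and x: "x \<in> TT" and y: "y \<in> TT"
    and gx: "Good al be x" and gy: "Good al be y"
  shows "Good al be (x + y)"
proof -
  have rr: "((x + y) - sg (x + y)) - ((x - sg x) + (y - sg y)) \<in> RR"
  proof -
    have eq: "- (sg (x + y) - (sg x + sg y)) = ((x + y) - sg (x + y)) - ((x - sg x) + (y - sg y))"
      by (simp add: algebra_simps)
    show ?thesis by (rule R_eq[OF R_neg[OF S_add[OF x y]] eq])
  qed
  have "Gmap g al be ((x + y) - sg (x + y)) - Gmap g al be ((x - sg x) + (y - sg y)) = 0"
    by (rule trans[OF G_diff[symmetric] G_R[OF al be rr]])
  then have e1: "Gmap g al be ((x + y) - sg (x + y)) = Gmap g al be (x - sg x) + Gmap g al be (y - sg y)"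
    by (simp only: right_minus_eq G_add)
  have "wedgeT ((x + y) - sg (x + y)) - wedgeT ((x - sg x) + (y - sg y)) = 0"
    by (rule trans[OF wedge_diff[symmetric] wedge_R[OF rr]])
  then have e2: "wedgeT ((x + y) - sg (x + y)) = wedgeT (x - sg x) + wedgeT (y - sg y)"
    by (simp only: right_minus_eq wedge_add)
  show ?thesis unfolding Good_def e1 e2
  proof
    fix a assume a: "a \<in> AA"
    obtain Y1 where Y1: "Y1 \<in> TT" "a * Gmap g al be (x - sg x) - Gmap g al be (x - sg x) * a = Gmap g al be Y1"
      "wedgeT Y1 = a * wedgeT (x - sg x) - wedgeT (x - sg x) * a" "sg Y1 + Y1 \<in> RR"
      using gx a unfolding Good_def by blast
    obtain Y2 where Y2: "Y2 \<in> TT" "a * Gmap g al be (y - sg y) - Gmap g al be (y - sg y) * a = Gmap g al be Y2"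
      "wedgeT Y2 = a * wedgeT (y - sg y) - wedgeT (y - sg y) * a" "sg Y2 + Y2 \<in> RR"
      using gy a unfolding Good_def by blast
    have s: "sg (Y1 + Y2) + (Y1 + Y2) \<in> RR"
    proof -
      have eq: "(sg (Y1 + Y2) - (sg Y1 + sg Y2)) + (sg Y1 + Y1) + (sg Y2 + Y2) = sg (Y1 + Y2) + (Y1 + Y2)"
        by (simp add: algebra_simps)
      show ?thesis by (rule R_eq[OF R_add[OF R_add[OF S_add[OF Y1(1) Y2(1)] Y1(4)] Y2(4)] eq])
    qed
    show "\<exists>Y\<in>TT. a * (Gmap g al be (x - sg x) + Gmap g al be (y - sg y)) -
              (Gmap g al be (x - sg x) + Gmap g al be (y - sg y)) * a = Gmap g al be Y \<and>
              wedgeT Y = a * (wedgeT (x - sg x) + wedgeT (y - sg y)) - (wedgeT (x - sg x) + wedgeT (y - sg y)) * a \<and>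
              sg Y + Y \<in> RR"
    proof (intro bexI[of _ "Y1 + Y2"] conjI)
      show "Y1 + Y2 \<in> TT" by (rule T_add[OF Y1(1) Y2(1)])
      show "sg (Y1 + Y2) + (Y1 + Y2) \<in> RR" by (rule s)
      show "a * (Gmap g al be (x - sg x) + Gmap g al be (y - sg y)) -
              (Gmap g al be (x - sg x) + Gmap g al be (y - sg y)) * a = Gmap g al be (Y1 + Y2)"
        using Y1(2) Y2(2) by (simp add: G_add algebra_simps)
      show "wedgeT (Y1 + Y2) = a * (wedgeT (x - sg x) + wedgeT (y - sg y)) - (wedgeT (x - sg x) + wedgeT (y - sg y)) * a"
        by (simp only: wedge_add Y1(3) Y2(3)) (simp add: algebra_simps)
    qed
  qed
qed

lemma Good_neg:
  assumes al: "al \<in> ZE" and be: "be \<in> ZE" and x: "x \<in> TT" and gx: "Good al be x"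
  shows "Good al be (- x)"
proof -
  have rr: "(- x - sg (- x)) + (x - sg x) \<in> RR"
  proof -
    have eq: "- (sg (- x) + sg x) = (- x - sg (- x)) + (x - sg x)" by (simp add: algebra_simps)
    show ?thesis by (rule R_eq[OF R_neg[OF S_neg[OF x]] eq])
  qed
  have "Gmap g al be (- x - sg (- x)) + Gmap g al be (x - sg x) = 0"
    by (rule trans[OF G_add[symmetric] G_R[OF al be rr]])
  then have e1: "Gmap g al be (- x - sg (- x)) = - Gmap g al be (x - sg x)"
    by (simp only: eq_neg_iff_add_eq_0)
  have "wedgeT (- x - sg (- x)) + wedgeT (x - sg x) = 0"
    by (rule trans[OF wedge_add[symmetric] wedge_R[OF rr]])
  then have e2: "wedgeT (- x - sg (- x)) = - wedgeT (x - sg x)"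
    by (simp only: eq_neg_iff_add_eq_0)
  show ?thesis unfolding Good_def e1 e2
  proof
    fix a assume a: "a \<in> AA"
    obtain Y1 where Y1: "Y1 \<in> TT" "a * Gmap g al be (x - sg x) - Gmap g al be (x - sg x) * a = Gmap g al be Y1"
      "wedgeT Y1 = a * wedgeT (x - sg x) - wedgeT (x - sg x) * a" "sg Y1 + Y1 \<in> RR"
      using gx a unfolding Good_def by blast
    have s: "sg (- Y1) + - Y1 \<in> RR"
    proof -
      have eq: "(sg (- Y1) + sg Y1) - (sg Y1 + Y1) = sg (- Y1) + - Y1" by (simp add: algebra_simps)
      show ?thesis by (rule R_eq[OF R_diff[OF S_neg[OF Y1(1)] Y1(4)] eq])
    qed
    show "\<exists>Y\<in>TT. a * - Gmap g al be (x - sg x) - - Gmap g al be (x - sg x) * a = Gmap g al be Y \<and>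
              wedgeT Y = a * - wedgeT (x - sg x) - - wedgeT (x - sg x) * a \<and> sg Y + Y \<in> RR"
    proof (intro bexI[of _ "- Y1"] conjI)
      show "- Y1 \<in> TT" by (rule T_neg[OF Y1(1)])
      show "sg (- Y1) + - Y1 \<in> RR" by (rule s)
      show "a * - Gmap g al be (x - sg x) - - Gmap g al be (x - sg x) * a = Gmap g al be (- Y1)"
        using Y1(2) by (simp add: G_minus algebra_simps)
      show "wedgeT (- Y1) = a * - wedgeT (x - sg x) - - wedgeT (x - sg x) * a"
        by (simp only: wedge_minus Y1(3)) (simp add: algebra_simps)
    qed
  qed
qed


lemma Good_gen:
  assumes al: "al \<in> ZE" and be: "be \<in> ZE" and z: "z \<in> ZE" and z': "z' \<in> ZE" and e: "e \<in> AA"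
  shows "Good al be (tens z (z' * e))"
proof -
  have alE: "al \<in> EE" and beE: "be \<in> EE" and zE: "z \<in> EE" and z'E: "z' \<in> EE"
    using al be z z' by (simp_all add: ZE_E)
  define t where "t = tens z (z' * e)"
  define u where "u = tens z' (z * e)"
  have tT: "t \<in> TT" and uT: "u \<in> TT" unfolding t_def u_def
    by (simp_all add: T_tens zE z'E EA_mul e)
  have fl: "sg t - u \<in> RR" unfolding t_def u_def by (rule flip_e[OF z z' e])
  have rr: "(t - sg t) - (t - u) \<in> RR"
  proof -
    have eq: "- (sg t - u) = (t - sg t) - (t - u)" by (simp add: algebra_simps)
    show ?thesis by (rule R_eq[OF R_neg[OF fl] eq])
  qed
  have "Gmap g al be (t - sg t) - Gmap g al be (t - u) = 0"
    by (rule trans[OF G_diff[symmetric] G_R[OF al be rr]])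
  then have e1: "Gmap g al be (t - sg t) = g al z * (g be z' * e) - g al z' * (g be z * e)"
    by (simp add: right_minus_eq G_diff t_def u_def G_tens g_rA[OF beE] z'E zE e mult.assoc)
  have "wedgeT (t - sg t) - wedgeT (t - u) = 0"
    by (rule trans[OF wedge_diff[symmetric] wedge_R[OF rr]])
  then have e2: "wedgeT (t - sg t) = z * (z' * e) - z' * (z * e)"
    by (simp add: right_minus_eq wedge_diff t_def u_def)
  show ?thesis unfolding t_def[symmetric] Good_def e1 e2
  proof
    fix a assume a: "a \<in> AA"
    define e' where "e' = a * e - e * a"
    have e': "e' \<in> AA" unfolding e'_def by (intro Om_diff AA_mul a e)
    define Y where "Y = tens z (z' * e') - tens z' (z * e')"
    have YT: "Y \<in> TT" unfolding Y_def by (intro T_diff T_tens zE z'E EA_mul e')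
    have f1: "sg (tens z (z' * e')) - tens z' (z * e') \<in> RR" by (rule flip_e[OF z z' e'])
    have f2: "sg (tens z' (z * e')) - tens z (z' * e') \<in> RR" by (rule flip_e[OF z' z e'])
    have sd: "sg Y - (sg (tens z (z' * e')) - sg (tens z' (z * e'))) \<in> RR"
      unfolding Y_def by (intro S_diff T_tens zE z'E EA_mul e')
    have sY: "sg Y + Y \<in> RR"
    proof -
      have eq: "(sg Y - (sg (tens z (z' * e')) - sg (tens z' (z * e')))) + (sg (tens z (z' * e')) - tens z' (z * e'))
          - (sg (tens z' (z * e')) - tens z (z' * e')) = sg Y + Y"
        by (simp add: Y_def algebra_simps)
      show ?thesis by (rule R_eq[OF R_diff[OF R_add[OF sd f1] f2] eq])
    qed
    have c1: "a * g al z = g al z * a" by (rule ZA_comm[OF g_Z[OF al z] a])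
    have c2: "a * g be z' = g be z' * a" by (rule ZA_comm[OF g_Z[OF be z'] a])
    have c3: "a * g al z' = g al z' * a" by (rule ZA_comm[OF g_Z[OF al z'] a])
    have c4: "a * g be z = g be z * a" by (rule ZA_comm[OF g_Z[OF be z] a])
    have GY: "Gmap g al be Y = g al z * (g be z' * e') - g al z' * (g be z * e')"
      by (simp add: Y_def G_diff G_tens g_rA[OF beE] z'E zE e' mult.assoc)
    have wY: "wedgeT Y = z * (z' * e') - z' * (z * e')"
      by (simp add: Y_def wedge_diff)
    show "\<exists>Y\<in>TT. a * (g al z * (g be z' * e) - g al z' * (g be z * e)) -
             (g al z * (g be z' * e) - g al z' * (g be z * e)) * a = Gmap g al be Y \<and>
             wedgeT Y = a * (z * (z' * e) - z' * (z * e)) - (z * (z' * e) - z' * (z * e)) * a \<and>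
             sg Y + Y \<in> RR"
    proof (intro bexI[of _ Y] conjI)
      show "a * (g al z * (g be z' * e) - g al z' * (g be z * e)) -
             (g al z * (g be z' * e) - g al z' * (g be z * e)) * a = Gmap g al be Y"
        unfolding GY e'_def by (rule comm_id[OF c1 c2 c3 c4])
      show "wedgeT Y = a * (z * (z' * e) - z' * (z * e)) - (z * (z' * e) - z' * (z * e)) * a"
        unfolding wY e'_def by (rule comm_id[OF ZE_comm[OF z a] ZE_comm[OF z' a] ZE_comm[OF z' a] ZE_comm[OF z a], symmetric])
    qed (use YT sY in auto)
  qed
qed

lemma Good_all: assumes al: "al \<in> ZE" and be: "be \<in> ZE" and t: "t \<in> TT" shows "Good al be t"
  by (rule T_induct[where S="Good al be", OF t Good_zero[OF al be]])
     (auto intro: Good_add[OF al be] Good_neg[OF al be] Good_sat[OF al be] Good_gen[OF al be])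

lemma anti_E: assumes w: "w \<in> ZE" and e: "e \<in> EE" shows "w * e + e * w = 0"
proof (rule E_induct[OF e])
  show "w * 0 + 0 * w = 0" by simp
next
  fix u v assume "w * u + u * w = 0" "w * v + v * w = 0"
  then show "w * (u + v) + (u + v) * w = 0" by (simp add: algebra_simps)
next
  fix z r assume z: "z \<in> ZE" and r: "r \<in> AA"
  have "z * r * w = z * w * r" using ZE_comm[OF w r] by (simp add: mult.assoc)
  then have "w * (z * r) + z * r * w = (w * z + z * w) * r" by (simp add: algebra_simps)
  then show "w * (z * r) + z * r * w = 0" using anti_ZZ[OF w z] by simp
qed

lemma dw_comm: assumes w: "w \<in> ZE" and a: "a \<in> AA" shows "a * d w = d w * a"
proof -
  have wE: "w \<in> EE" using w by (rule ZE_E)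
  have l1: "d (w * a) = d w * a - w * d a" using leib[of w 1 a] wE by simp
  have l2: "d (a * w) = d a * w + a * d w" using leib[of a 0 w] a by simp
  have "a * w = w * a" by (rule ZE_comm[OF w a])
  then have "d w * a - w * d a = d a * w + a * d w" using l1 l2 by simp
  moreover have "w * d a + d a * w = 0" by (rule anti_E[OF w d_A[OF a]])
  ultimately show ?thesis by (simp add: algebra_simps)
qed

lemma ZA_E_comm: assumes z0: "z0 \<in> ZA" and e: "e \<in> EE" shows "z0 * e = e * z0"
proof (rule E_induct[OF e])
  show "z0 * 0 = 0 * z0" by simp
next
  fix u v assume "z0 * u = u * z0" "z0 * v = v * z0"
  then show "z0 * (u + v) = (u + v) * z0" by (simp add: algebra_simps)
next
  fix z r assume z: "z \<in> ZE" and r: "r \<in> AA"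
  have "z0 * (z * r) = (z0 * z) * r" by (simp add: mult.assoc)
  also have "\<dots> = (z * z0) * r" using ZE_comm[OF z ZA_A[OF z0]] by simp
  also have "\<dots> = z * (z0 * r)" by (simp add: mult.assoc)
  also have "\<dots> = z * (r * z0)" using ZA_comm[OF z0 r] by simp
  also have "\<dots> = (z * r) * z0" by (simp add: mult.assoc)
  finally show "z0 * (z * r) = z * r * z0" .
qed

lemma d_ZA: assumes z0: "z0 \<in> ZA" shows "d z0 \<in> ZE"
proof (rule ZE_I)
  show "d z0 \<in> EE" by (rule d_A[OF ZA_A[OF z0]])
next
  fix a assume a: "a \<in> AA"
  have l1: "d (a * z0) = d a * z0 + a * d z0" using leib[of a 0 z0] a by simp
  have l2: "d (z0 * a) = d z0 * a + z0 * d a" using leib[of z0 0 a] ZA_A[OF z0] by simp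
  have "a * z0 = z0 * a" by (rule ZA_comm[OF z0 a])
  then have "d a * z0 + a * d z0 = d z0 * a + z0 * d a" using l1 l2 by simp
  moreover have "z0 * d a = d a * z0" by (rule ZA_E_comm[OF z0 d_A[OF a]])
  ultimately show "a * d z0 = d z0 * a" by simp
qed


lemma Phi_E: assumes j: "j < n" shows "Phi Om n p iota j \<in> EE"
proof -
  define v where "v = (\<lambda>k. if k < n then p k j else 0)"
  have "v \<in> pA_n Om n p"
    unfolding pA_n_def
  proof (intro CollectI conjI allI impI)
    fix k assume "k < n" then show "v k \<in> AA" using fg_pA j by (simp add: v_def)
  next
    fix k assume "n \<le> k" then show "v k = 0" by (simp add: v_def)
  next
    fix i assume i: "i < n"
    have "(\<Sum>k<n. p i k * v k) = (\<Sum>k<n. p i k * p k j)" by (rule sum.cong) (simp_all add: v_def)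
    also have "\<dots> = p i j" using fg_idem i j by blast
    finally show "(\<Sum>k<n. p i k * v k) = v i" using i by (simp add: v_def)
  qed
  then have "v \<in> iota ` EE" using bij_betw_imp_surj_on[OF fg_bij] by simp
  then show ?thesis unfolding Phi_def v_def[symmetric] by (rule inv_into_into)
qed

lemma iota_A: assumes w: "w \<in> EE" and j: "j < n" shows "iota w j \<in> AA"
proof -
  have "iota w \<in> pA_n Om n p" using bij_betwE[OF fg_bij] w by blast
  then show ?thesis using j by (simp add: pA_n_def)
qed

lemma nablaGr_T: assumes w: "w \<in> EE" shows "nablaGr Om d n p iota w \<in> TT"
  unfolding nablaGr_def
proof (rule sum_closed)
  fix j assume "j \<in> {..<n}"
  then have j: "j < n" by simp
  show "tens (Phi Om n p iota j) (d (iota w j)) \<in> TT"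
    by (rule T_tens[OF Phi_E[OF j] d_A[OF iota_A[OF w j]]])
qed (simp_all add: T_zero T_add)

lemma wedge_T2: assumes t: "t \<in> TT" shows "wedgeT t \<in> Om 2"
proof -
  have "Poly_Mapping.keys t \<subseteq> EE \<times> EE" using t by (simp add: tfree_def)
  then show ?thesis
  proof (induction t rule: frag_induction)
    case zero then show ?case by (simp add: wedgeT_def Om_zero)
  next
    case (one x)
    obtain x1 x2 where xx: "x = (x1, x2)" by (cases x)
    have x1: "x1 \<in> EE" and x2: "x2 \<in> EE" using one xx by auto
    have "frag_of x = tens x1 x2" by (simp add: xx tens_frag)
    then show ?case using EE_mul[OF x1 x2] by simp
  next
    case (diff a b) then show ?case by (simp add: wedge_diff Om_diff)
  qed
qed

lemma Qinv_prop: assumes w: "w \<in> Om 2" shows "Qinv F w \<in> F \<and> wedgeT (Qinv F w) = w"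
  unfolding Qinv_def by (rule someI_ex) (use onto[OF w] in blast)

lemma N_T: assumes w: "w \<in> EE" shows "nabla0 Om d n p iota F w \<in> TT"
proof -
  have "wedgeT (nablaGr Om d n p iota w) + d w \<in> Om 2"
    by (rule Om_add[OF wedge_T2[OF nablaGr_T[OF w]] d_E[OF w]])
  from Qinv_prop[OF this] show ?thesis
    unfolding nabla0_def by (intro T_diff nablaGr_T w F_T) blast
qed

lemma wedge_N: assumes w: "w \<in> EE" shows "wedgeT (nabla0 Om d n p iota F w) = - d w"
proof -
  have "wedgeT (nablaGr Om d n p iota w) + d w \<in> Om 2"
    by (rule Om_add[OF wedge_T2[OF nablaGr_T[OF w]] d_E[OF w]])
  from Qinv_prop[OF this] show ?thesis
    unfolding nabla0_def by (simp add: wedge_diff)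
qed

lemma G_oms: assumes al: "al \<in> ZE" and be: "be \<in> ZE" and w: "w \<in> ZE"
  shows "Gmap g al be (nabla0 Om d n p iota F w - sg (nabla0 Om d n p iota F w)) \<in> ZA"
proof -
  have wE: "w \<in> EE" using w by (rule ZE_E)
  define N where "N = nabla0 Om d n p iota F w"
  have NT: "N \<in> TT" unfolding N_def by (rule N_T[OF wE])
  have wX: "wedgeT (N - sg N) = - d w + - d w"
    by (simp only: wedge_diff wedge_S[OF NT]) (simp add: N_def wedge_N[OF wE])
  have XT: "N - sg N \<in> TT" by (rule T_diff[OF NT S_T[OF NT]])
  show ?thesis unfolding N_def[symmetric]
  proof (rule ZA_I)
    show "Gmap g al be (N - sg N) \<in> AA" by (rule G_A[OF ZE_E[OF al] ZE_E[OF be] XT])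
  next
    fix a assume a: "a \<in> AA"
    obtain Y where YT: "Y \<in> TT" and GY: "a * Gmap g al be (N - sg N) - Gmap g al be (N - sg N) * a = Gmap g al be Y"
      and wY: "wedgeT Y = a * wedgeT (N - sg N) - wedgeT (N - sg N) * a" and sY: "sg Y + Y \<in> RR"
      using Good_all[OF al be NT] a unfolding Good_def by blast
    have c: "a * d w = d w * a" by (rule dw_comm[OF w a])
    have wY0: "wedgeT Y = 0" unfolding wY wX by (simp add: algebra_simps c)
    have YY: "Y + Y \<in> RR"
    proof -
      have eq: "(sg Y + Y) - (sg Y - Y) = Y + Y" by simp
      show ?thesis by (rule R_eq[OF R_diff[OF sY S_fix[OF YT wY0]] eq])
    qed
    have "Gmap g al be Y + Gmap g al be Y = 0"
      by (rule trans[OF G_add[symmetric] G_R[OF al be YY]])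
    then have "Gmap g al be Y = 0" by (rule half)
    then show "a * Gmap g al be (N - sg N) = Gmap g al be (N - sg N) * a" using GY by simp
  qed
qed

end

theorem lemma6p8:
  fixes Om :: "nat \<Rightarrow> 'w::ring_1 set"
    and d :: "'w \<Rightarrow> 'w" and c :: "complex \<Rightarrow> 'w"
    and n :: nat and p :: "nat \<Rightarrow> nat \<Rightarrow> 'w" and iota :: "'w \<Rightarrow> nat \<Rightarrow> 'w"
    and F :: "'w frtens set" and psym :: "'w frtens \<Rightarrow> 'w frtens"
    and g :: "'w \<Rightarrow> 'w \<Rightarrow> 'w"
  assumes "diff_calculus Om d c"
    and "fg_projective Om n p iota"
    and "cond_central_basis Om"
    and "cond_split Om F psym"
    and "cond_flip Om psym"
    and "pseudo_riem_metric Om psym g"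
    and "\<omega> \<in> centre_of (Om 1) (Om 0)" and "\<eta> \<in> centre_of (Om 1) (Om 0)"
    and "\<theta> \<in> centre_of (Om 1) (Om 0)"
  shows "psi Om d n p iota F psym g \<omega> \<theta> \<eta> \<in> centre_of (Om 0) (Om 0)"
proof -
  interpret L: lc Om d c n p iota F psym g
    using assms(1-6) by (unfold_locales)
  have w: "\<omega> \<in> L.ZE" and e: "\<eta> \<in> L.ZE" and t: "\<theta> \<in> L.ZE" using assms(7-9) by simp_all
  show ?thesis
    unfolding psi_def Let_def
    by (intro L.ZA_add L.ZA_diff L.g_Z L.d_ZA L.G_oms w e t)
qed

end
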